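(* Let $V=\mathbb{C}x+\mathbb{C}y+\mathbb{C}z$ with the action of the Heisenberg group $H_3$ given by $e_1\cdot x=z,\ e_1\cdot y=x,\ e_1\cdot z=y$, $e_2\cdot x=x,\ e_2\cdot y=\omega y,\ e_2\cdot z=\omega^2 z$ ($\omega$ a primitive third root of unity), extended diagonally to tensor powers. For $p=[a:b:c]\in\mathbb{P}^2$ let $W_p\subset V\otimes V$ be the span of $ayz+bzy+cx^2,\ azx+bxz+cy^2,\ axy+byx+cz^2$. Then for every $p\in\mathbb{P}^2$, the space of $H_3$-invariants $(W_p\otimes V\cap V\otimes W_p)^{H_3}$ is 1-dimensional.
   Context: $H_3=\langle e_1,e_2\mid [e_1,e_2]\text{ central},\ e_1^3=e_2^3=1\rangle$ is the Heisenberg group of order 27. The intersection is taken inside $V\otimes V\otimes V$. *)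

theory Defs
  imports "HOL-Analysis.Analysis"
begin

text \<open>V = C^3 with basis x, y, z indexed by 0, 1, 2 :: 3 (integers mod 3).
  V (x) V = complex^(3 x 3), V (x) V (x) V = complex^(3 x 3 x 3), index (i,j,k).\<close>

type_synonym V1 = "complex ^ 3"
type_synonym V2 = "complex ^ (3 \<times> 3)"
type_synonym V3 = "complex ^ (3 \<times> 3 \<times> 3)"

definition wpow :: "complex \<Rightarrow> 3 \<Rightarrow> complex" where
  "wpow \<omega> i = (if i = 0 then 1 else if i = 1 then \<omega> else \<omega>^2)"

text \<open>Action of the generators on V: e1 x = z, e1 y = x, e1 z = y (basis vector i goes to i-1),
  e2 acts on basis vector i by omega^i.  Extended diagonally to V (x) V (x) V.\<close>
definition act_e1 :: "V3 \<Rightarrow> V3" where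
  "act_e1 t = (\<chi> ijk. case ijk of (i,j,k) \<Rightarrow> t $ (i+1, j+1, k+1))"

definition act_e2 :: "complex \<Rightarrow> V3 \<Rightarrow> V3" where
  "act_e2 \<omega> t = (\<chi> ijk. case ijk of (i,j,k) \<Rightarrow> wpow \<omega> i * wpow \<omega> j * wpow \<omega> k * t $ (i,j,k))"

text \<open>H_3-invariants: fixed by both generators (which generate H_3).\<close>
definition invariants :: "complex \<Rightarrow> V3 set" where
  "invariants \<omega> = {t. act_e1 t = t \<and> act_e2 \<omega> t = t}"

definition b2 :: "3 \<Rightarrow> 3 \<Rightarrow> V2" where
  "b2 i j = axis (i,j) 1"

definition W :: "complex \<Rightarrow> complex \<Rightarrow> complex \<Rightarrow> V2 set" where
  "W a b c = vec.span
     { a *s b2 1 2 + b *s b2 2 1 + c *s b2 0 0,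
       a *s b2 2 0 + b *s b2 0 2 + c *s b2 1 1,
       a *s b2 0 1 + b *s b2 1 0 + c *s b2 2 2 }"

definition tens_left :: "V2 set \<Rightarrow> V3 set" where
  "tens_left S = vec.span {(\<chi> ijk. case ijk of (i,j,k) \<Rightarrow> w $ (i,j) * v $ k) | w v. w \<in> S \<and> (v :: V1) \<in> UNIV}"

definition tens_right :: "V2 set \<Rightarrow> V3 set" where
  "tens_right S = vec.span {(\<chi> ijk. case ijk of (i,j,k) \<Rightarrow> u $ i * w $ (j,k)) | u w. (u :: V1) \<in> UNIV \<and> w \<in> S}"

end

theory Submission
  imports Defs
begin

definition tl3 :: "V2 \<Rightarrow> V1 \<Rightarrow> V3" where
  "tl3 w v = (\<chi> ijk. case ijk of (i,j,k) \<Rightarrow> w $ (i,j) * v $ k)"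
definition tr3 :: "V1 \<Rightarrow> V2 \<Rightarrow> V3" where
  "tr3 u w = (\<chi> ijk. case ijk of (i,j,k) \<Rightarrow> u $ i * w $ (j,k))"

definition g1 where "g1 a b c = a *s b2 1 2 + b *s b2 2 1 + c *s b2 0 0"
definition g2 where "g2 a b c = a *s b2 2 0 + b *s b2 0 2 + c *s b2 1 1"
definition g3 where "g3 a b c = a *s b2 0 1 + b *s b2 1 0 + c *s b2 2 2"

definition T0 :: "complex \<Rightarrow> complex \<Rightarrow> complex \<Rightarrow> V3" where
  "T0 a b c = tl3 (g1 a b c) (axis 0 1) + tl3 (g2 a b c) (axis 1 1) + tl3 (g3 a b c) (axis 2 1)"

lemma c3: "((x::3) = 0 \<Longrightarrow> P) \<Longrightarrow> (x = 1 \<Longrightarrow> P) \<Longrightarrow> (x = 2 \<Longrightarrow> P) \<Longrightarrow> P"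
  using exhaust_3[of x] by auto

lemma three3: "(3::3) = 0" by simp

lemma W_eq: "W a b c = vec.span {g1 a b c, g2 a b c, g3 a b c}"
  unfolding W_def g1_def g2_def g3_def ..

lemma T0_comp: "T0 a b c $ (i,j,k) = (if i = j \<and> j = k then c
   else if (i,j,k) \<in> {(1,2,0),(2,0,1),(0,1,2)} then a
   else if (i,j,k) \<in> {(2,1,0),(0,2,1),(1,0,2)} then b else 0)"
  unfolding T0_def tl3_def g1_def g2_def g3_def b2_def
  apply (rule c3[of i]; rule c3[of j]; rule c3[of k])
  by (simp_all add: axis_def)

lemma vec3_eq: "(\<And>i j k. (x::V3) $ (i,j,k) = y $ (i,j,k)) \<Longrightarrow> x = y"
  by (metis prod_cases3 vec_eq_iff)

lemma T0_right: "T0 a b c = tr3 (axis 0 1) (g1 a b c) + tr3 (axis 1 1) (g2 a b c) + tr3 (axis 2 1) (g3 a b c)"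
  apply (rule vec3_eq)
  subgoal for i j k
  unfolding T0_comp tr3_def g1_def g2_def g3_def b2_def
  apply (rule c3[of i]; rule c3[of j]; rule c3[of k])
  by (simp_all add: axis_def)
  done

lemma T0_left: "T0 a b c \<in> tens_left (W a b c)"
proof -
  have g: "g1 a b c \<in> W a b c" "g2 a b c \<in> W a b c" "g3 a b c \<in> W a b c"
    unfolding W_eq by (auto intro: vec.span_base)
  have "tl3 w v \<in> tens_left (W a b c)" if "w \<in> W a b c" for w v
    unfolding tens_left_def tl3_def by (rule vec.span_base) (use that in blast)
  then have "tl3 (g1 a b c) (axis 0 1) \<in> tens_left (W a b c)" "tl3 (g2 a b c) (axis 1 1) \<in> tens_left (W a b c)"
    "tl3 (g3 a b c) (axis 2 1) \<in> tens_left (W a b c)" using g by auto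
  then show ?thesis unfolding T0_def tens_left_def by (intro vec.span_add)
qed

lemma T0_rightin: "T0 a b c \<in> tens_right (W a b c)"
proof -
  have g: "g1 a b c \<in> W a b c" "g2 a b c \<in> W a b c" "g3 a b c \<in> W a b c"
    unfolding W_eq by (auto intro: vec.span_base)
  have "tr3 v w \<in> tens_right (W a b c)" if "w \<in> W a b c" for w v
    unfolding tens_right_def tr3_def by (rule vec.span_base) (use that in blast)
  then have "tr3 (axis 0 1) (g1 a b c) \<in> tens_right (W a b c)" "tr3 (axis 1 1) (g2 a b c) \<in> tens_right (W a b c)"
    "tr3 (axis 2 1) (g3 a b c) \<in> tens_right (W a b c)" using g by auto
  then show ?thesis unfolding T0_right tens_right_def by (intro vec.span_add)
qed

lemma omega_facts:
  fixes \<omega> :: complex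
  assumes "\<omega> ^ 3 = 1" "\<omega> \<noteq> 1"
  shows "\<omega> * \<omega> = \<omega>^2" "\<omega> * \<omega>^2 = 1" "\<omega>^2 * \<omega> = 1" "\<omega>^2 * \<omega>^2 = \<omega>" "\<omega>^2 \<noteq> 1" "\<omega>^6 = 1" "\<omega>^4 = \<omega>"
proof -
  show "\<omega>^4 = \<omega>"
  proof -
    have "\<omega>^4 = \<omega>^3 * \<omega>^1" using power_add[of \<omega> 3 1] by simp
    then show ?thesis using assms by simp
  qed
  show "\<omega>^6 = 1" proof -
    have "\<omega>^6 = \<omega>^3 * \<omega>^3" by (simp flip: power_add)
    then show ?thesis using assms by simp
  qed
  show "\<omega> * \<omega> = \<omega>^2" by (rule power2_eq_square[symmetric])
  show "\<omega> * \<omega>^2 = 1" using assms by (simp add: power3_eq_cube power2_eq_square mult.assoc)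
  show "\<omega>^2 * \<omega> = 1" using assms by (simp add: power3_eq_cube power2_eq_square)
  show "\<omega>^2 * \<omega>^2 = \<omega>" proof -
    have "\<omega>^2 * \<omega>^2 = \<omega>^3 * \<omega>" by (simp add: power3_eq_cube power2_eq_square)
    then show ?thesis using assms by simp
  qed
  show "\<omega>^2 \<noteq> 1"
  proof
    assume "\<omega>^2 = 1"
    then have "\<omega>^3 = \<omega>" by (simp add: power3_eq_cube power2_eq_square)
    with assms show False by simp
  qed
qed

lemma T0_inv:
  assumes "\<omega> ^ 3 = 1" "\<omega> \<noteq> 1"
  shows "T0 a b c \<in> invariants \<omega>"
proof -
  note om = omega_facts[OF assms]
  have "act_e1 (T0 a b c) = T0 a b c"
    apply (rule vec3_eq)
    subgoal for i j k
    unfolding act_e1_def vec_lambda_beta prod.case T0_comp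
    apply (rule c3[of i]; rule c3[of j]; rule c3[of k])
    by simp_all
    done
  moreover have "act_e2 \<omega> (T0 a b c) = T0 a b c"
    apply (rule vec3_eq)
    subgoal for i j k
    unfolding act_e2_def vec_lambda_beta prod.case T0_comp
    apply (rule c3[of i]; rule c3[of j]; rule c3[of k])
    by (simp_all add: wpow_def om assms)
    done
  ultimately show ?thesis unfolding invariants_def by simp
qed

lemma inv_scale: "t \<in> invariants \<omega> \<Longrightarrow> r *s t \<in> invariants \<omega>"
  unfolding invariants_def act_e1_def act_e2_def vec_eq_iff
  by (auto split: prod.splits simp: algebra_simps)

lemma W_func:
  assumes "w \<in> W a b c"
  shows "w$(1,2)*b - w$(2,1)*a = 0 \<and> w$(1,2)*c - w$(0,0)*a = 0 \<and> w$(2,1)*c - w$(0,0)*b = 0"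
  using assms unfolding W_eq
proof (induct rule: vec.span_induct_alt)
  case base
  then show ?case by simp
next
  case (step r x y)
  have "x$(1,2)*b - x$(2,1)*a = 0 \<and> x$(1,2)*c - x$(0,0)*a = 0 \<and> x$(2,1)*c - x$(0,0)*b = 0"
    using step(1) unfolding g1_def g2_def g3_def b2_def by (auto simp: axis_def)
  then show ?case using step(2) by (auto simp: algebra_simps)
qed

lemma TL_func:
  assumes "T \<in> tens_left (W a b c)"
  shows "T$(1,2,0)*b - T$(2,1,0)*a = 0 \<and> T$(1,2,0)*c - T$(0,0,0)*a = 0 \<and> T$(2,1,0)*c - T$(0,0,0)*b = 0"
  using assms unfolding tens_left_def
proof (induct rule: vec.span_induct_alt)
  case base
  then show ?case by simp
next
  case (step r x y)
  then obtain w v where x: "x = tl3 w v" and w: "w \<in> W a b c" unfolding tl3_def by blast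
  have e: "w$(1,2)*b - w$(2,1)*a = 0" "w$(1,2)*c - w$(0,0)*a = 0" "w$(2,1)*c - w$(0,0)*b = 0"
    using W_func[OF w] by auto
  have "x$(1,2,0)*b - x$(2,1,0)*a = v$0 * (w$(1,2)*b - w$(2,1)*a)"
    "x$(1,2,0)*c - x$(0,0,0)*a = v$0 * (w$(1,2)*c - w$(0,0)*a)"
    "x$(2,1,0)*c - x$(0,0,0)*b = v$0 * (w$(2,1)*c - w$(0,0)*b)"
    unfolding x tl3_def by (simp_all add: algebra_simps)
  then have "x$(1,2,0)*b - x$(2,1,0)*a = 0 \<and> x$(1,2,0)*c - x$(0,0,0)*a = 0 \<and> x$(2,1,0)*c - x$(0,0,0)*b = 0"
    using e by simp
  then show ?case using step(2) by (auto simp: algebra_simps)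
qed

lemma inv_form:
  fixes \<omega> :: complex
  assumes "\<omega> ^ 3 = 1" "\<omega> \<noteq> 1" "T \<in> invariants \<omega>"
    and "T$(0,0,0) = r * c" "T$(1,2,0) = r * a" "T$(2,1,0) = r * b"
  shows "T = r *s T0 a b c"
proof -
  note om = omega_facts[OF assms(1,2)]
  have e1: "\<And>i j k. T$(i+1,j+1,k+1) = T$(i,j,k)"
  proof -
    fix i j k
    have "act_e1 T $ (i,j,k) = T $ (i,j,k)" using assms(3) unfolding invariants_def by simp
    then show "T$(i+1,j+1,k+1) = T$(i,j,k)" unfolding act_e1_def by simp
  qed
  have e2: "\<And>i j k. wpow \<omega> i * wpow \<omega> j * wpow \<omega> k \<noteq> 1 \<Longrightarrow> T$(i,j,k) = 0"
  proof -
    fix i j k assume ne: "wpow \<omega> i * wpow \<omega> j * wpow \<omega> k \<noteq> 1"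
    have "wpow \<omega> i * wpow \<omega> j * wpow \<omega> k * T$(i,j,k) = T$(i,j,k)"
    proof -
      have "act_e2 \<omega> T $ (i,j,k) = T $ (i,j,k)" using assms(3) unfolding invariants_def by simp
      then show ?thesis unfolding act_e2_def by simp
    qed
    then have "(wpow \<omega> i * wpow \<omega> j * wpow \<omega> k - 1) * T$(i,j,k) = 0" by (simp add: algebra_simps)
    then show "T$(i,j,k) = 0" using ne by simp
  qed
  have f: "T$(1,1,1) = T$(0,0,0)" "T$(2,2,2) = T$(1,1,1)"
     "T$(2,0,1) = T$(1,2,0)" "T$(0,1,2) = T$(2,0,1)"
     "T$(0,2,1) = T$(2,1,0)" "T$(1,0,2) = T$(0,2,1)"
    using e1[of 0 0 0] e1[of 1 1 1] e1[of 1 2 0] e1[of 2 0 1] e1[of 2 1 0] e1[of 0 2 1] by (simp_all add: three3)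
  show ?thesis
    apply (rule vec3_eq)
    subgoal for i j k
    unfolding vector_scalar_mult_def vec_lambda_beta T0_comp
    apply (rule c3[of i]; rule c3[of j]; rule c3[of k])
    apply (simp_all add: f assms(4-6))
    apply (auto intro!: e2 simp: wpow_def om assms(1,2))
    done
    done
qed

lemma prop_lemma:
  fixes a b c al be ga :: complex
  assumes "(a, b, c) \<noteq> (0, 0, 0)"
    and h: "be*b - ga*a = 0" "be*c - al*a = 0" "ga*c - al*b = 0"
  shows "\<exists>r. al = r * c \<and> be = r * a \<and> ga = r * b"
proof (cases "a = 0")
  case False
  show ?thesis
    by (rule exI[of _ "be / a"]) (use False h in \<open>auto simp: field_simps\<close>)
next
  case a0: True
  show ?thesis
  proof (cases "c = 0")
    case False
    show ?thesis
      by (rule exI[of _ "al / c"]) (use False a0 h in \<open>auto simp: field_simps\<close>)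
  next
    case c0: True
    then have b0: "b \<noteq> 0" using a0 assms(1) by auto
    show ?thesis
      by (rule exI[of _ "ga / b"]) (use b0 c0 a0 h in \<open>auto simp: field_simps\<close>)
  qed
qed

theorem mainTheorem7:
  fixes \<omega> a b c :: complex
  assumes "\<omega> ^ 3 = 1" and "\<omega> \<noteq> 1"
    and "(a, b, c) \<noteq> (0, 0, 0)"
  shows "vec.dim (tens_left (W a b c) \<inter> tens_right (W a b c) \<inter> invariants \<omega>) = 1"
proof -
  let ?S = "tens_left (W a b c) \<inter> tens_right (W a b c) \<inter> invariants \<omega>"
  have "?S = vec.span {T0 a b c}"
  proof
    show "?S \<subseteq> vec.span {T0 a b c}"
    proof
      fix T assume T: "T \<in> ?S"
      then have "T$(1,2,0)*b - T$(2,1,0)*a = 0 \<and> T$(1,2,0)*c - T$(0,0,0)*a = 0 \<and> T$(2,1,0)*c - T$(0,0,0)*b = 0"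
        using TL_func by blast
      then obtain r where r: "T$(0,0,0) = r * c" "T$(1,2,0) = r * a" "T$(2,1,0) = r * b"
        using prop_lemma[OF assms(3)] by blast
      have "T = r *s T0 a b c" using inv_form[OF assms(1,2) _ r] T by blast
      then show "T \<in> vec.span {T0 a b c}" by (simp add: vec.span_base vec.span_scale)
    qed
  next
    show "vec.span {T0 a b c} \<subseteq> ?S"
    proof
      fix T assume "T \<in> vec.span {T0 a b c}"
      then obtain r where T: "T = r *s T0 a b c" unfolding vec.span_singleton by blast
      have "T \<in> tens_left (W a b c)" unfolding T using T0_left unfolding tens_left_def by (rule vec.span_scale)
      moreover have "T \<in> tens_right (W a b c)" unfolding T using T0_rightin unfolding tens_right_def by (rule vec.span_scale)
      moreover have "T \<in> invariants \<omega>" unfolding T using T0_inv[OF assms(1,2)] by (rule inv_scale)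
      ultimately show "T \<in> ?S" by blast
    qed
  qed
  moreover have "T0 a b c \<noteq> 0"
  proof
    assume z: "T0 a b c = 0"
    have "T0 a b c $ (0,0,0) = c" "T0 a b c $ (1,2,0) = a" "T0 a b c $ (2,1,0) = b"
      unfolding T0_comp by simp_all
    with z assms(3) show False by simp
  qed
  then have "vec.independent {T0 a b c}" by (simp add: vec.independent_insert vec.span_empty)
  ultimately show ?thesis by (simp add: vec.dim_span_eq_card_independent)
qed

end
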